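(* Let $n\ge2$, let $\zeta_1,\dots,\zeta_M$ be distinct points of $\mathbb{D}$ and let $W_1,\dots,W_M\in\Omega_{1,n}$. Write $\pi_n=(X,Y)$. If there exists a holomorphic map $F:\mathbb{D}\to\Omega_{1,n}$ with $F(\zeta_j)=W_j$ for every $j$, then for each $z\in\overline{\mathbb{D}}$ the $M\times M$ matrix \[ M_z:=\left[\frac{1-\overline{\Psi_n(z;X(W_j),Y(W_j))}\,\Psi_n(z;X(W_k),Y(W_k))}{1-\overline{\zeta_j}\zeta_k}\right]_{j,k=1}^M \] is positive semi-definite (in particular, each $\Psi_n(\cdot;X(W_j),Y(W_j))$ has no poles in $\overline{\mathbb{D}}$).
   Context: $\mathbb{D}$ is the open unit disc. For $A\in\mathbb{C}^{n\times n}$, $A_I$ ($I$ an increasing $j$-tuple in $\{1,\dots,n\}$) is the principal submatrix with rows and columns indexed by $I$; $\mathscr{I}^j$ is the set of such $j$-tuples. $\mu_E(A):=\big(\inf\{\|X\|: X\in E,\ \mathbb{I}-AX \text{ singular}\}\big)^{-1}$ (operator norm), $E^{1,n}:=\{[w]\oplus(z\mathbb{I}_{n-1}): z,w\in\mathbb{C}\}$, $\Omega_{1,n}:=\{A:\mu_{E^{1,n}}(A)<1\}$. The map $\pi_n=(X,Y):\mathbb{C}^{n\times n}\to\mathbb{C}^n\times\mathbb{C}^{n-1}$: $X_1(A)=a_{1,1}$, $X_j(A)=\sum_{I\in\mathscr{I}^j: i_1=1}\det(A_I)$ ($2\le j\le n$), $Y_j(A)=\sum_{I\in\mathscr{I}^j: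 i_1\ge2}\det(A_I)$ ($1\le j\le n-1$). For $(x,y)\in\mathbb{C}^n\times\mathbb{C}^{n-1}$: $P_n(z;x):=\sum_{j=0}^{n-1}(-1)^jx_{j+1}z^j$, $Q_n(z;y):=1+\sum_{j=1}^{n-1}(-1)^jy_jz^j$, and $\Psi_n(\cdot;x,y)$ is the rational function $P_n(\cdot;x)/Q_n(\cdot;y)$ after cancelling all common linear factors of numerator and denominator. *)

theory Defs
  imports "HOL-Analysis.Analysis" "HOL-Combinatorics.Permutations"
    "HOL-Computational_Algebra.Polynomial_Factorial" "HOL-Computational_Algebra.Field_as_Ring"
begin

text \<open>n x n complex matrices are represented as functions nat => nat => complex,
  only entries with indices < n being relevant; paper index i corresponds to i-1 here.\<close>

type_synonym cmat = "nat \<Rightarrow> nat \<Rightarrow> complex"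

definition vnorm :: "nat \<Rightarrow> (nat \<Rightarrow> complex) \<Rightarrow> real" where
  "vnorm n v = sqrt (\<Sum>i<n. (cmod (v i))^2)"

definition mvec :: "nat \<Rightarrow> cmat \<Rightarrow> (nat \<Rightarrow> complex) \<Rightarrow> (nat \<Rightarrow> complex)" where
  "mvec n A v = (\<lambda>i. \<Sum>k<n. A i k * v k)"

definition mmul :: "nat \<Rightarrow> cmat \<Rightarrow> cmat \<Rightarrow> cmat" where
  "mmul n A B = (\<lambda>i j. \<Sum>k<n. A i k * B k j)"

definition opnorm :: "nat \<Rightarrow> cmat \<Rightarrow> real" where
  "opnorm n A = Sup {vnorm n (mvec n A v) | v. vnorm n v \<le> 1}"

definition idm :: cmat where
  "idm = (\<lambda>i j. if i = j then 1 else 0)"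

definition pdet :: "cmat \<Rightarrow> nat set \<Rightarrow> complex" where
  "pdet A I = (\<Sum>p | p permutes I. of_int (sign p) * (\<Prod>i\<in>I. A i (p i)))"

definition cdet :: "nat \<Rightarrow> cmat \<Rightarrow> complex" where
  "cdet n A = pdet A {..<n}"

definition singular :: "nat \<Rightarrow> cmat \<Rightarrow> bool" where
  "singular n A \<longleftrightarrow> cdet n A = 0"

text \<open>structured singular value; inf of the empty set is +infinity, so mu = 0 then\<close>
definition mu :: "nat \<Rightarrow> cmat set \<Rightarrow> cmat \<Rightarrow> real" where
  "mu n E A = (let S = {opnorm n X | X. X \<in> E \<and> singular n (\<lambda>i j. idm i j - mmul n A X i j)}
               in if S = {} then 0 else inverse (Inf S))"

definition E1n :: "cmat set" where
  "E1n = {X. \<exists>z w. X = (\<lambda>i j. if i = j then (if i = 0 then w else z) else 0)}"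

definition Omega1n :: "nat \<Rightarrow> cmat set" where
  "Omega1n n = {A. mu n E1n A < 1}"

text \<open>pi_n = (X, Y): Xc n A j for 1 <= j <= n, Yc n A j for 1 <= j <= n-1
  (paper index 1 is index 0 here)\<close>
definition Xc :: "nat \<Rightarrow> cmat \<Rightarrow> nat \<Rightarrow> complex" where
  "Xc n A j = (if j = 1 then A 0 0
     else (\<Sum>I\<in>{I. I \<subseteq> {..<n} \<and> card I = j \<and> 0 \<in> I}. pdet A I))"

definition Yc :: "nat \<Rightarrow> cmat \<Rightarrow> nat \<Rightarrow> complex" where
  "Yc n A j = (\<Sum>I\<in>{I. I \<subseteq> {..<n} \<and> card I = j \<and> 0 \<notin> I}. pdet A I)"

definition Pn :: "nat \<Rightarrow> (nat \<Rightarrow> complex) \<Rightarrow> complex poly" where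
  "Pn n x = (\<Sum>j<n. monom ((-1)^j * x (Suc j)) j)"

definition Qn :: "nat \<Rightarrow> (nat \<Rightarrow> complex) \<Rightarrow> complex poly" where
  "Qn n y = 1 + (\<Sum>j\<in>{1..<n}. monom ((-1)^j * y j) j)"

text \<open>reduced numerator / denominator: cancel all common (linear) factors, i.e. the gcd\<close>
definition Psi_num :: "nat \<Rightarrow> (nat \<Rightarrow> complex) \<Rightarrow> (nat \<Rightarrow> complex) \<Rightarrow> complex poly" where
  "Psi_num n x y = Pn n x div gcd (Pn n x) (Qn n y)"

definition Psi_den :: "nat \<Rightarrow> (nat \<Rightarrow> complex) \<Rightarrow> (nat \<Rightarrow> complex) \<Rightarrow> complex poly" where
  "Psi_den n x y = Qn n y div gcd (Pn n x) (Qn n y)"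

definition Psi :: "nat \<Rightarrow> complex \<Rightarrow> (nat \<Rightarrow> complex) \<Rightarrow> (nat \<Rightarrow> complex) \<Rightarrow> complex" where
  "Psi n z x y = poly (Psi_num n x y) z / poly (Psi_den n x y) z"

definition psd :: "nat \<Rightarrow> cmat \<Rightarrow> bool" where
  "psd m A \<longleftrightarrow> (\<forall>c :: nat \<Rightarrow> complex.
     let q = (\<Sum>j<m. \<Sum>k<m. cnj (c j) * A j k * c k) in Im q = 0 \<and> Re q \<ge> 0)"

end

theory Submission imports Defs "HOL-Complex_Analysis.Complex_Analysis" begin



lemma moeb_num:
  fixes a u v :: complex
  shows "cnj (1 - cnj a * u) * (1 - cnj a * v) - (cnj u - cnj a) * (v - a) = (1 - cnj a * a) * (1 - cnj u * v)"
  by (simp add: algebra_simps)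

lemma gen_cancel: "(P::complex) \<noteq> 0 \<Longrightarrow> (1 - N / P) * P = P - N"
  by (simp add: field_simps)

lemma moeb_id:
  fixes a u v :: complex
  assumes "1 - cnj a * u \<noteq> 0" "1 - cnj a * v \<noteq> 0"
  shows "(1 - cnj ((u - a)/(1 - cnj a * u)) * ((v - a)/(1 - cnj a * v))) * (cnj (1 - cnj a * u) * (1 - cnj a * v))
       = (1 - cnj a * a) * (1 - cnj u * v)"
proof -
  have h: "cnj (1 - cnj a * u) \<noteq> 0" using assms(1) by (metis complex_cnj_zero_iff)
  have e: "cnj ((u - a)/(1 - cnj a * u)) * ((v - a)/(1 - cnj a * v)) = (cnj u - cnj a) * (v - a) / (cnj (1 - cnj a * u) * (1 - cnj a * v))"
    by simp
  have "(1 - cnj ((u - a)/(1 - cnj a * u)) * ((v - a)/(1 - cnj a * v))) * (cnj (1 - cnj a * u) * (1 - cnj a * v))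
     = cnj (1 - cnj a * u) * (1 - cnj a * v) - (cnj u - cnj a) * (v - a)"
    unfolding e by (rule gen_cancel) (use h assms(2) in simp)
  then show ?thesis using moeb_num by simp
qed

definition pform :: "nat \<Rightarrow> cmat \<Rightarrow> (nat \<Rightarrow> complex) \<Rightarrow> complex" where
  "pform M K c = (\<Sum>j<M. \<Sum>k<M. cnj (c j) * K j k * c k)"

definition nneg :: "complex \<Rightarrow> bool" where "nneg q \<longleftrightarrow> Im q = 0 \<and> 0 \<le> Re q"

lemma pform_congr:
  assumes "\<And>j k. j < M \<Longrightarrow> k < M \<Longrightarrow> K1 j k = cnj (e j) * K2 j k * e k"
  shows "pform M K1 c = pform M K2 (\<lambda>k. e k * c k)"
  unfolding pform_def
  by (intro sum.cong refl) (simp add: assms algebra_simps)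

lemma pform_rank1: "pform M (\<lambda>j k. cnj (v j) * v k) c = cnj (\<Sum>k<M. v k * c k) * (\<Sum>k<M. v k * c k)"
  unfolding pform_def cnj_sum sum_product by (intro sum.cong refl) (simp add: algebra_simps)

lemma nneg_cnj: "nneg (cnj S * S)"
  by (simp add: nneg_def algebra_simps)

lemma pform_add: "pform M (\<lambda>j k. K1 j k + K2 j k) c = pform M K1 c + pform M K2 c"
  unfolding pform_def by (simp add: algebra_simps sum.distrib)

lemma pform_last: "c M = 0 \<Longrightarrow> pform (Suc M) K c = pform M K c"
  unfolding pform_def by simp

lemma pform_cong: "(\<And>j k. j < M \<Longrightarrow> k < M \<Longrightarrow> K1 j k = K2 j k) \<Longrightarrow> pform M K1 c = pform M K2 c"
  unfolding pform_def by (intro sum.cong refl) auto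

lemma nneg_add: "nneg a \<Longrightarrow> nneg b \<Longrightarrow> nneg (a + b)" by (simp add: nneg_def)
lemma nneg_ofreal: "0 \<le> r \<Longrightarrow> nneg (of_real r)" by (simp add: nneg_def)

lemma scale_lem:
  fixes X Y Z D1 D2 :: complex and s :: real
  assumes key: "X * (cnj D1 * D2) = of_real (s^2) * Y" and nz: "Z \<noteq> 0" and s: "s \<noteq> 0"
  shows "Y / Z = cnj (D1 / of_real s) * (X / Z) * (D2 / of_real s)"
proof -
  have "cnj (D1 / of_real s) * (X / Z) * (D2 / of_real s) = (X * (cnj D1 * D2)) / (of_real (s^2) * Z)"
    by (simp add: power2_eq_square mult_ac)
  also have "\<dots> = Y / Z" unfolding key using s nz by simp
  finally show ?thesis by simp
qed

definition pick :: "(complex \<Rightarrow> complex) \<Rightarrow> (nat \<Rightarrow> complex) \<Rightarrow> cmat" where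
  "pick f \<zeta> = (\<lambda>j k. (1 - cnj (f (\<zeta> j)) * f (\<zeta> k)) / (1 - cnj (\<zeta> j) * \<zeta> k))"

lemma ball_ne: "cmod x < 1 \<Longrightarrow> cmod y < 1 \<Longrightarrow> 1 - cnj x * y \<noteq> 0"
proof
  assume "cmod x < 1" "cmod y < 1" "1 - cnj x * y = 0"
  then have "cmod (cnj x * y) = 1" by (metis eq_iff_diff_eq_0 norm_one)
  moreover have "cmod (cnj x * y) < 1" using \<open>cmod x < 1\<close> \<open>cmod y < 1\<close>
    by (simp add: norm_mult) (metis mult_le_one less_le norm_ge_zero mult_strict_mono' mult_1 less_imp_le le_less_trans)
  ultimately show False by simp
qed

lemma pick_ball:
  assumes "f holomorphic_on ball 0 1" "\<And>z. z \<in> ball 0 1 \<Longrightarrow> f z \<in> ball 0 1"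
    "inj_on \<zeta> {..<M}" "\<And>j. j < M \<Longrightarrow> \<zeta> j \<in> ball 0 1"
  shows "nneg (pform M (pick f \<zeta>) c)"
  using assms
proof (induction M arbitrary: f c)
  case 0
  then show ?case by (simp add: pform_def nneg_def)
next
  case (Suc M)
  note holf = Suc.prems(1) and fball = Suc.prems(2) and zin = Suc.prems(4)
  define p where "p = \<zeta> M"
  have pin: "cmod p < 1" using zin[of M] by (simp add: p_def)
  define a where "a = f p"
  have ain: "cmod a < 1" using fball[of p] pin by (simp add: a_def)
  define h where "h = Moebius_function 0 a \<circ> f"
  have holh: "h holomorphic_on ball 0 1"
    unfolding h_def
    by (rule holomorphic_on_compose[OF holf holomorphic_on_subset[OF Moebius_function_holomorphic[OF ain]]])
      (use fball in auto)
  have hball: "cmod (h z) < 1" if "z \<in> ball 0 1" for z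
    using Moebius_function_norm_lt_1[OF ain, of "f z" 0] fball[OF that] by (simp add: h_def)
  have hp: "h p = 0" by (simp add: h_def a_def Moebius_function_eq_zero)
  define s where "s = sqrt (1 - (cmod a)^2)"
  have s2: "s^2 = 1 - (cmod a)^2" unfolding s_def
    using ain by (simp add: abs_square_less_1 less_imp_le)
  have spos: "s > 0" unfolding s_def using ain by (simp add: abs_square_less_1)
  define e where "e k = (1 - cnj a * f (\<zeta> k)) / of_real s" for k
  have step1: "pick f \<zeta> j k = cnj (e j) * pick h \<zeta> j k * e k" if "j < Suc M" "k < Suc M" for j k
  proof -
    let ?u = "f (\<zeta> j)" and ?v = "f (\<zeta> k)"
    have u: "cmod ?u < 1" "cmod ?v < 1" using fball zin that by auto
    have nu: "1 - cnj a * ?u \<noteq> 0" "1 - cnj a * ?v \<noteq> 0"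
      using ball_ne[OF ain u(1)] ball_ne[OF ain u(2)] by auto
    have nz: "1 - cnj (\<zeta> j) * \<zeta> k \<noteq> 0" using ball_ne zin that by auto
    have hv: "h (\<zeta> j) = (?u - a) / (1 - cnj a * ?u)" "h (\<zeta> k) = (?v - a) / (1 - cnj a * ?v)"
      by (simp_all add: h_def Moebius_function_simple)
    have aa: "1 - cnj a * a = of_real (s^2)"
      using s2 by (simp add: complex_norm_square[symmetric] mult.commute)
    have cs: "cnj (of_real s :: complex) = of_real s" by simp
    have nc: "cnj (1 - cnj a * ?u) \<noteq> 0" using nu(1) by (metis complex_cnj_zero_iff)
    have key: "(1 - cnj (h (\<zeta> j)) * h (\<zeta> k)) * (cnj (1 - cnj a * ?u) * (1 - cnj a * ?v)) = of_real (s^2) * (1 - cnj ?u * ?v)"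
      unfolding hv moeb_id[OF nu] aa ..
    show ?thesis
      unfolding pick_def e_def using scale_lem[OF key nz] spos by simp
  qed
  have e1: "pform (Suc M) (pick f \<zeta>) c = pform (Suc M) (pick h \<zeta>) (\<lambda>k. e k * c k)"
    by (rule pform_congr) (rule step1)
  define c' where "c' = (\<lambda>k. e k * c k)"
  define b where "b = Moebius_function 0 p"
  have bsimp: "b z = (z - p)/(1 - cnj p * z)" for z by (simp add: b_def Moebius_function_simple)
  define k where "k = h \<circ> Moebius_function 0 (-p)"
  have mp: "cmod (-p) < 1" using pin by simp
  have holk: "k holomorphic_on ball 0 1"
    unfolding k_def
    by (rule holomorphic_on_compose[OF Moebius_function_holomorphic[OF mp] holomorphic_on_subset[OF holh]])
      (use Moebius_function_norm_lt_1[OF mp] in auto)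
  have k0: "k 0 = 0" by (simp add: k_def Moebius_function_of_zero hp)
  have kball: "cmod (k z) < 1" if "cmod z < 1" for z
    using hball Moebius_function_norm_lt_1[OF mp that] by (simp add: k_def)
  have hb: "cmod (h z) \<le> cmod (b z)" if "z \<in> ball 0 1" for z
  proof -
    have bz: "cmod (b z) < 1" using Moebius_function_norm_lt_1[OF pin, of z 0] that by (simp add: b_def)
    have "Moebius_function 0 (-p) (b z) = z" unfolding b_def
      by (rule Moebius_function_compose) (use pin that in auto)
    then have "h z = k (b z)" by (simp add: k_def)
    then show ?thesis using Schwarz_Lemma(1)[OF holk k0 kball bz] by simp
  qed
  define q where "q = (\<lambda>z. if z = p then deriv h p else (h z - h p)/(z - p))"
  have holq: "q holomorphic_on ball 0 1" unfolding q_def by (rule pole_lemma_open[OF holh]) simp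
  define g where "g z = q z * (1 - cnj p * z)" for z
  have holg: "g holomorphic_on ball 0 1" unfolding g_def by (intro holomorphic_intros holq)
  have hbg: "h z = b z * g z" if "z \<in> ball 0 1" for z
  proof (cases "z = p")
    case True then show ?thesis by (simp add: hp bsimp)
  next
    case False
    have "1 - cnj p * z \<noteq> 0" using ball_ne[of p z] pin that by simp
    then show ?thesis using False by (simp add: g_def q_def bsimp hp)
  qed
  have gle1: "cmod (g z) \<le> 1" if "z \<in> ball 0 1" "z \<noteq> p" for z
  proof -
    have "1 - cnj p * z \<noteq> 0" using ball_ne[of p z] pin that by simp
    then have "b z \<noteq> 0" using that by (simp add: bsimp)
    then have "cmod (b z) > 0" by simp
    moreover have "cmod (b z) * cmod (g z) \<le> cmod (b z) * 1"
      using hb[OF that(1)] hbg[OF that(1)] by (simp add: norm_mult)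
    ultimately show ?thesis by (simp add: mult_le_cancel_left_pos)
  qed
  have gle: "cmod (g z) \<le> 1" if "z \<in> ball 0 1" for z
  proof (cases "z = p")
    case False thus ?thesis using gle1 that by auto
  next
    case True
    have "isCont g p"
      using holg pin by (meson continuous_on_eq_continuous_at holomorphic_on_imp_continuous_on open_ball mem_ball_0)
    then have "(g \<longlongrightarrow> g p) (at p)" by (simp add: isCont_def)
    moreover have "eventually (\<lambda>x. x \<in> ball 0 1) (nhds p)"
      by (rule eventually_nhds_in_open) (use pin in auto)
    then have "eventually (\<lambda>x. cmod (g x) \<le> 1) (at p)"
      unfolding eventually_at_filter by (rule eventually_mono) (use gle1 in auto)
    ultimately have "cmod (g p) \<le> 1" by (intro Lim_norm_ubound[of "at p"]) auto
    then show ?thesis using True by simp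
  qed
  define r where "r = sqrt (1 - (cmod p)^2)"
  have r2: "r^2 = 1 - (cmod p)^2" unfolding r_def
    using pin by (simp add: abs_square_less_1 less_imp_le)
  define v where "v k = of_real r / (1 - cnj p * \<zeta> k)" for k
  define bb where "bb k = b (\<zeta> k)" for k
  have step2: "pick h \<zeta> j k = cnj (v j) * v k + cnj (bb j) * pick g \<zeta> j k * bb k"
    if "j < Suc M" "k < Suc M" for j k
  proof -
    have zz: "\<zeta> j \<in> ball 0 1" "\<zeta> k \<in> ball 0 1" using zin that by auto
    have nu: "1 - cnj p * \<zeta> j \<noteq> 0" "1 - cnj p * \<zeta> k \<noteq> 0"
      using ball_ne[OF pin] zz by auto
    have nz: "1 - cnj (\<zeta> j) * \<zeta> k \<noteq> 0" using ball_ne zz by auto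
    have nc: "cnj (1 - cnj p * \<zeta> j) \<noteq> 0" using nu(1) by (metis complex_cnj_zero_iff)
    have pp: "1 - cnj p * p = of_real (r^2)"
      using r2 by (simp add: complex_norm_square[symmetric] mult.commute)
    have key: "(1 - cnj (bb j) * bb k) * (cnj (1 - cnj p * \<zeta> j) * (1 - cnj p * \<zeta> k))
        = of_real (r^2) * (1 - cnj (\<zeta> j) * \<zeta> k)"
      unfolding bb_def bsimp moeb_id[OF nu] pp ..
    have X: "1 - cnj (bb j) * bb k = of_real (r^2) * (1 - cnj (\<zeta> j) * \<zeta> k) / (cnj (1 - cnj p * \<zeta> j) * (1 - cnj p * \<zeta> k))"
      using key nu nc by (simp add: eq_divide_eq)
    have A1: "(1 - cnj (bb j) * bb k) / (1 - cnj (\<zeta> j) * \<zeta> k) = cnj (v j) * v k"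
      unfolding X v_def using nz by (simp add: power2_eq_square mult_ac)
    have hj: "h (\<zeta> j) = bb j * g (\<zeta> j)" "h (\<zeta> k) = bb k * g (\<zeta> k)"
      using hbg zz by (auto simp: bb_def)
    have E: "1 - cnj (h (\<zeta> j)) * h (\<zeta> k) = (1 - cnj (bb j) * bb k) + cnj (bb j) * (1 - cnj (g (\<zeta> j)) * g (\<zeta> k)) * bb k"
      unfolding hj by (simp add: algebra_simps)
    then have "pick h \<zeta> j k = (1 - cnj (bb j) * bb k) / (1 - cnj (\<zeta> j) * \<zeta> k) + cnj (bb j) * pick g \<zeta> j k * bb k"
      unfolding pick_def E by (simp add: add_divide_distrib)
    then show ?thesis unfolding A1 .
  qed
  have e2: "pform (Suc M) (pick h \<zeta>) c' = pform (Suc M) (\<lambda>j k. cnj (v j) * v k) c'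
       + pform (Suc M) (\<lambda>j k. cnj (bb j) * pick g \<zeta> j k * bb k) c'"
    by (subst pform_add[symmetric], rule pform_cong) (use step2 in auto)
  have bbM: "bb M = 0" by (simp add: bb_def p_def[symmetric] bsimp)
  have e3: "pform (Suc M) (\<lambda>j k. cnj (bb j) * pick g \<zeta> j k * bb k) c' = pform M (pick g \<zeta>) (\<lambda>k. bb k * c' k)"
  proof -
    have "pform (Suc M) (\<lambda>j k. cnj (bb j) * pick g \<zeta> j k * bb k) c' = pform (Suc M) (pick g \<zeta>) (\<lambda>k. bb k * c' k)"
      by (rule pform_congr) simp
    also have "\<dots> = pform M (pick g \<zeta>) (\<lambda>k. bb k * c' k)" by (rule pform_last) (simp add: bbM)
    finally show ?thesis .
  qed
  have ng: "nneg (pform M (pick g \<zeta>) (\<lambda>k. bb k * c' k))"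
  proof (cases "\<exists>x\<in>ball 0 1. cmod (g x) = 1")
    case True
    then obtain x where x: "x \<in> ball 0 1" "cmod (g x) = 1" by blast
    have "g constant_on ball 0 1"
    proof (rule Schwarz2[OF holg, of "1 - cmod x" x])
      show "0 < 1 - cmod x" using x by simp
      show "ball x (1 - cmod x) \<subseteq> ball 0 1" using x by (simp add: ball_subset_ball_iff)
      show "cmod (g z) \<le> cmod (g x)" if "cmod (x - z) < 1 - cmod x" for z
      proof -
        have "z \<in> ball x (1 - cmod x)" using that by (simp add: dist_norm)
        have "cmod z \<le> cmod x + cmod (z - x)" by (rule norm_triangle_sub)
        then have "z \<in> ball 0 1" using that by (simp add: norm_minus_commute)
        then show ?thesis using gle x by auto
      qed
    qed
    then obtain c0 where c0: "\<And>z. z \<in> ball 0 1 \<Longrightarrow> g z = c0" by (auto simp: constant_on_def)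
    have "cmod c0 = 1" using c0 x by auto
    have "cnj c0 * c0 = of_real ((cmod c0)^2)" by (subst complex_norm_square) (rule mult.commute)
    then have cc: "1 - cnj c0 * c0 = 0" using \<open>cmod c0 = 1\<close> by simp
    have "pform M (pick g \<zeta>) (\<lambda>k. bb k * c' k) = pform M (\<lambda>j k. 0) (\<lambda>k. bb k * c' k)"
      by (rule pform_cong) (use zin c0 cc in \<open>auto simp: pick_def\<close>)
    then show ?thesis by (simp add: pform_def nneg_def)
  next
    case False
    have "g z \<in> ball 0 1" if "z \<in> ball 0 1" for z
      using gle[OF that] False that by (auto simp: less_le)
    then show ?thesis
      by (intro Suc.IH holg) (use Suc.prems(3) zin in \<open>auto intro: inj_on_subset\<close>)
  qed
  show ?case unfolding e1 c'_def[symmetric] e2 e3 pform_rank1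
    by (intro nneg_add nneg_cnj ng)
qed



lemma perms_fix_eq:
  assumes "S \<subseteq> N"
  shows "{p. p permutes N \<and> (\<forall>i\<in>N - S. p i = i)} = {p. p permutes S}"
proof (intro set_eqI iffI)
  fix p assume "p \<in> {p. p permutes N \<and> (\<forall>i\<in>N - S. p i = i)}"
  then have p: "p permutes N" "\<forall>i\<in>N - S. p i = i" by auto
  have "\<forall>x. x \<notin> S \<longrightarrow> p x = x" using p permutes_not_in by fastforce
  moreover have "\<forall>y. \<exists>!x. p x = y" using p(1) unfolding permutes_def by blast
  ultimately show "p \<in> {p. p permutes S}" unfolding permutes_def by blast
next
  fix p assume "p \<in> {p. p permutes S}"
  then have "p permutes S" by simp
  then show "p \<in> {p. p permutes N \<and> (\<forall>i\<in>N - S. p i = i)}"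
    using permutes_subset[OF _ assms] permutes_not_in by fastforce
qed

lemma det_expand:
  fixes A :: cmat and d :: "nat \<Rightarrow> complex" and N :: "nat set"
  assumes fin: "finite N"
  shows "(\<Sum>p | p permutes N. of_int (sign p) * (\<Prod>i\<in>N. (if i = p i then 1 else 0) - A i (p i) * d (p i)))
       = (\<Sum>S\<in>Pow N. (-1)^card S * (\<Prod>i\<in>S. d i) * pdet A S)"
proof -
  have fP: "finite {p. p permutes N}" using finite_permutations[OF fin] .
  have "(\<Sum>p | p permutes N. of_int (sign p) * (\<Prod>i\<in>N. (if i = p i then 1 else 0) - A i (p i) * d (p i)))
     = (\<Sum>p | p permutes N. \<Sum>S\<in>Pow N. of_int (sign p) * ((\<Prod>i\<in>S. - (A i (p i) * d (p i))) * (\<Prod>i\<in>N - S. (if i = p i then 1 else 0))))"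
  proof (rule sum.cong[OF refl])
    fix p
    have "(\<Prod>i\<in>N. (if i = p i then 1 else 0) - A i (p i) * d (p i))
        = (\<Prod>i\<in>N. - (A i (p i) * d (p i)) + (if i = p i then 1 else 0))" by (simp add: algebra_simps)
    also have "\<dots> = (\<Sum>S\<in>Pow N. (\<Prod>i\<in>S. - (A i (p i) * d (p i))) * (\<Prod>i\<in>N - S. (if i = p i then 1 else (0::complex))))"
      by (rule prod_add[OF fin])
    finally show "of_int (sign p) * (\<Prod>i\<in>N. (if i = p i then 1 else 0) - A i (p i) * d (p i)) =
      (\<Sum>S\<in>Pow N. of_int (sign p) * ((\<Prod>i\<in>S. - (A i (p i) * d (p i))) * (\<Prod>i\<in>N - S. (if i = p i then 1 else 0))))"
      by (simp add: sum_distrib_left)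
  qed
  also have "\<dots> = (\<Sum>S\<in>Pow N. \<Sum>p | p permutes N. of_int (sign p) * ((\<Prod>i\<in>S. - (A i (p i) * d (p i))) * (\<Prod>i\<in>N - S. (if i = p i then 1 else 0))))"
    by (rule sum.swap)
  also have "\<dots> = (\<Sum>S\<in>Pow N. (-1)^card S * (\<Prod>i\<in>S. d i) * pdet A S)"
  proof (rule sum.cong[OF refl])
    fix S assume "S \<in> Pow N"
    then have SN: "S \<subseteq> N" by simp
    have fS: "finite S" using SN fin finite_subset by blast
    have "(\<Sum>p | p permutes N. of_int (sign p) * ((\<Prod>i\<in>S. - (A i (p i) * d (p i))) * (\<Prod>i\<in>N - S. (if i = p i then 1 else 0))))
      = (\<Sum>p | p permutes N. if (\<forall>i\<in>N - S. p i = i) then of_int (sign p) * (\<Prod>i\<in>S. - (A i (p i) * d (p i))) else 0)"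
    proof (rule sum.cong[OF refl])
      fix p
      have "(\<Prod>i\<in>N - S. (if i = p i then 1 else 0::complex)) = (if (\<forall>i\<in>N - S. p i = i) then 1 else 0)"
      proof (cases "\<forall>i\<in>N - S. p i = i")
        case True then show ?thesis by (intro trans[OF prod.neutral]) auto
      next
        case False
        then obtain i where i: "i \<in> N - S" "p i \<noteq> i" by blast
        have "(if i = p i then 1 else 0::complex) = 0" using i by auto
        then have "(\<Prod>i\<in>N - S. (if i = p i then 1 else 0::complex)) = 0"
          using fin i by (intro prod_zero) blast+
        then show ?thesis using False by simp
      qed
      then show "of_int (sign p) * ((\<Prod>i\<in>S. - (A i (p i) * d (p i))) * (\<Prod>i\<in>N - S. (if i = p i then 1 else 0)))
        = (if (\<forall>i\<in>N - S. p i = i) then of_int (sign p) * (\<Prod>i\<in>S. - (A i (p i) * d (p i))) else 0)"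
        by simp
    qed
    also have "\<dots> = (\<Sum>p \<in> {p \<in> {p. p permutes N}. (\<forall>i\<in>N - S. p i = i)}. of_int (sign p) * (\<Prod>i\<in>S. - (A i (p i) * d (p i))))"
      by (rule sum.inter_filter[symmetric, OF fP])
    also have "{p \<in> {p. p permutes N}. (\<forall>i\<in>N - S. p i = i)} = {p. p permutes S}"
      using perms_fix_eq[OF SN] by simp
    finally have "(\<Sum>p | p permutes N. of_int (sign p) * ((\<Prod>i\<in>S. - (A i (p i) * d (p i))) * (\<Prod>i\<in>N - S. (if i = p i then 1 else 0))))
       = (\<Sum>p | p permutes S. of_int (sign p) * (\<Prod>i\<in>S. - (A i (p i) * d (p i))))" .
    also have "(\<Sum>p | p permutes S. of_int (sign p) * (\<Prod>i\<in>S. - (A i (p i) * d (p i)))) = (\<Sum>p | p permutes S. (-1)^card S * (\<Prod>i\<in>S. d i) * (of_int (sign p) * (\<Prod>i\<in>S. A i (p i))))"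
    proof (rule sum.cong[OF refl])
      fix p assume "p \<in> {p. p permutes S}"
      then have pS: "p permutes S" by simp
      have dd: "(\<Prod>i\<in>S. d (p i)) = (\<Prod>i\<in>S. d i)"
        using prod.reindex_bij_betw[OF permutes_imp_bij[OF pS], of d] .
      have "(\<Prod>i\<in>S. - (A i (p i) * d (p i))) = (-1)^card S * ((\<Prod>i\<in>S. A i (p i)) * (\<Prod>i\<in>S. d (p i)))"
        by (simp add: prod_uminus prod.distrib)
      then show "of_int (sign p) * (\<Prod>i\<in>S. - (A i (p i) * d (p i))) = (-1)^card S * (\<Prod>i\<in>S. d i) * (of_int (sign p) * (\<Prod>i\<in>S. A i (p i)))"
        unfolding dd by (simp add: algebra_simps)
    qed
    also have "\<dots> = (-1)^card S * (\<Prod>i\<in>S. d i) * pdet A S"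
      unfolding pdet_def by (simp add: sum_distrib_left)
    finally show "(\<Sum>p | p permutes N. of_int (sign p) * ((\<Prod>i\<in>S. - (A i (p i) * d (p i))) * (\<Prod>i\<in>N - S. (if i = p i then 1 else 0))))
       = (-1)^card S * (\<Prod>i\<in>S. d i) * pdet A S" .
  qed
  finally show ?thesis .
qed



definition dd :: "complex \<Rightarrow> complex \<Rightarrow> nat \<Rightarrow> complex" where
  "dd w z i = (if i = 0 then w else z)"

lemma pdet_empty: "pdet A {} = 1"
  unfolding pdet_def by simp

lemma pdet_sing: "pdet A {a} = A a a"
  unfolding pdet_def by simp

lemma prod_dd: "finite S \<Longrightarrow> (\<Prod>i\<in>S. dd w z i) = (if 0 \<in> S then w * z^(card S - 1) else z^card S)"
proof (cases "0 \<in> S")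
  case True
  assume f: "finite S"
  have "S = insert 0 (S - {0})" using True by auto
  then have "(\<Prod>i\<in>S. dd w z i) = dd w z 0 * (\<Prod>i\<in>S - {0}. dd w z i)"
    using f by (metis prod.insert finite_Diff Diff_iff singletonI)
  also have "(\<Prod>i\<in>S - {0}. dd w z i) = (\<Prod>i\<in>S - {0}. z)" by (rule prod.cong) (auto simp: dd_def)
  finally show ?thesis using True f by (simp add: dd_def card_Diff_singleton)
next
  case False
  assume f: "finite S"
  have "(\<Prod>i\<in>S. dd w z i) = (\<Prod>i\<in>S. z)" by (rule prod.cong) (use False in \<open>auto simp: dd_def\<close>)
  then show ?thesis using False by simp
qed

lemma poly_Qn: "poly (Qn n y) z = 1 + (\<Sum>j\<in>{1..<n}. (-1)^j * y j * z^j)"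
  unfolding Qn_def by (simp add: poly_sum poly_monom)

lemma poly_Pn: "poly (Pn n x) z = (\<Sum>j<n. (-1)^j * x (Suc j) * z^j)"
  unfolding Pn_def by (simp add: poly_sum poly_monom)

lemma D_poly:
  assumes n: "n \<ge> 1"
  shows "(\<Sum>S\<in>Pow {..<n}. (-1)^card S * (\<Prod>i\<in>S. dd w z i) * pdet A S)
       = poly (Qn n (Yc n A)) z - w * poly (Pn n (Xc n A)) z"
proof -
  define T0 where "T0 = {S \<in> Pow {..<n}. 0 \<notin> S}"
  define T1 where "T1 = {S \<in> Pow {..<n}. 0 \<in> S}"
  have fin: "finite T0" "finite T1" unfolding T0_def T1_def by auto
  have PU: "Pow {..<n} = T0 \<union> T1" "T0 \<inter> T1 = {}" unfolding T0_def T1_def by auto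
  have finS: "finite S" if "S \<in> Pow {..<n}" for S using that finite_subset by auto
  have "(\<Sum>S\<in>Pow {..<n}. (-1)^card S * (\<Prod>i\<in>S. dd w z i) * pdet A S)
      = (\<Sum>S\<in>T0. (-1)^card S * (\<Prod>i\<in>S. dd w z i) * pdet A S) + (\<Sum>S\<in>T1. (-1)^card S * (\<Prod>i\<in>S. dd w z i) * pdet A S)"
    unfolding PU(1) by (rule sum.union_disjoint[OF fin PU(2)])
  also have "(\<Sum>S\<in>T0. (-1)^card S * (\<Prod>i\<in>S. dd w z i) * pdet A S) = (\<Sum>S\<in>T0. (-1)^card S * z^card S * pdet A S)"
    by (rule sum.cong[OF refl]) (auto simp: prod_dd T0_def finS)
  also have "\<dots> = (\<Sum>j\<in>{..<n}. \<Sum>S\<in>{S\<in>T0. card S = j}. (-1)^card S * z^card S * pdet A S)"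
  proof (rule sum.group[symmetric, OF fin(1)])
    show "finite {..<n}" by simp
    show "card ` T0 \<subseteq> {..<n}"
    proof
      fix j assume "j \<in> card ` T0"
      then obtain S where S: "S \<in> T0" "j = card S" by blast
      have "S \<subseteq> {1..<n}"
      proof
        fix x assume "x \<in> S"
        have "S \<subseteq> {..<n}" "0 \<notin> S" using S(1) unfolding T0_def by auto
        then have xn: "x < n" using \<open>x \<in> S\<close> by blast
        have "x \<noteq> 0"
        proof
          assume "x = 0"
          with \<open>x \<in> S\<close> \<open>0 \<notin> S\<close> show False by simp
        qed
        note xn this
        then show "x \<in> {1..<n}" by simp
      qed
      then have "card S \<le> card {1..<n}" by (intro card_mono) auto
      then show "j \<in> {..<n}" using S n by simp
    qed
  qed
  also have "\<dots> = (\<Sum>j\<in>{..<n}. (if j = 0 then 1 else (-1)^j * Yc n A j * z^j))"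
  proof (rule sum.cong[OF refl])
    fix j assume "j \<in> {..<n}"
    show "(\<Sum>S\<in>{S\<in>T0. card S = j}. (-1)^card S * z^card S * pdet A S) = (if j = 0 then 1 else (-1)^j * Yc n A j * z^j)"
    proof (cases "j = 0")
      case True
      have "{S\<in>T0. card S = j} = {{}}"
      proof (intro set_eqI iffI)
        fix S assume "S \<in> {S\<in>T0. card S = j}"
        then have S: "S \<subseteq> {..<n}" "card S = 0" using True unfolding T0_def by auto
        then have "finite S" using finite_subset by blast
        then show "S \<in> {{}}" using S by simp
      next
        fix S :: "nat set" assume "S \<in> {{}}"
        then show "S \<in> {S\<in>T0. card S = j}" using True unfolding T0_def by simp
      qed
      then show ?thesis using True by (simp add: pdet_empty)
    next
      case False
      have e: "{S\<in>T0. card S = j} = {I. I \<subseteq> {..<n} \<and> card I = j \<and> 0 \<notin> I}" unfolding T0_def by auto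
      have "(\<Sum>S\<in>{S\<in>T0. card S = j}. (-1)^card S * z^card S * pdet A S) = (\<Sum>S\<in>{S\<in>T0. card S = j}. (-1)^j * z^j * pdet A S)"
        by (rule sum.cong) auto
      also have "\<dots> = (-1)^j * z^j * Yc n A j" unfolding Yc_def e by (simp add: sum_distrib_left)
      finally show ?thesis using False by simp
    qed
  qed
  also have "\<dots> = poly (Qn n (Yc n A)) z"
  proof -
    have "{..<n} = {0..<n}" by auto
    then have "(\<Sum>j\<in>{..<n}. (if j = 0 then 1 else (-1)^j * Yc n A j * z^j))
        = 1 + (\<Sum>j\<in>{1..<n}. (if j = 0 then 1 else (-1)^j * Yc n A j * z^j))"
      using n by (simp add: sum.atLeast_Suc_lessThan)
    also have "(\<Sum>j\<in>{1..<n}. (if j = 0 then 1 else (-1)^j * Yc n A j * z^j)) = (\<Sum>j\<in>{1..<n}. (-1)^j * Yc n A j * z^j)"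
      by (rule sum.cong) auto
    finally show ?thesis by (simp add: poly_Qn)
  qed
  also have "(\<Sum>S\<in>T1. (-1)^card S * (\<Prod>i\<in>S. dd w z i) * pdet A S) = - w * (\<Sum>S\<in>T1. (-1)^(card S - 1) * z^(card S - 1) * pdet A S)"
  proof -
    have "(\<Sum>S\<in>T1. (-1)^card S * (\<Prod>i\<in>S. dd w z i) * pdet A S) = (\<Sum>S\<in>T1. - w * ((-1)^(card S - 1) * z^(card S - 1) * pdet A S))"
    proof (rule sum.cong[OF refl])
      fix S assume S: "S \<in> T1"
      then have fS: "finite S" and S0: "0 \<in> S" unfolding T1_def using finS by auto
      then have "card S \<noteq> 0" by auto
      then obtain m where m: "card S = Suc m" using not0_implies_Suc by blast
      then have "(-1::complex)^card S = - ((-1)^(card S - 1))" by simp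
      then show "(-1)^card S * (\<Prod>i\<in>S. dd w z i) * pdet A S = - w * ((-1)^(card S - 1) * z^(card S - 1) * pdet A S)"
        using fS S0 by (simp add: prod_dd)
    qed
    then show ?thesis by (simp add: sum_distrib_left)
  qed
  also have "(\<Sum>S\<in>T1. (-1)^(card S - 1) * z^(card S - 1) * pdet A S)
      = (\<Sum>j\<in>{..<n}. \<Sum>S\<in>{S\<in>T1. card S - 1 = j}. (-1)^(card S - 1) * z^(card S - 1) * pdet A S)"
  proof (rule sum.group[symmetric, OF fin(2)])
    show "finite {..<n}" by simp
    show "(\<lambda>S. card S - 1) ` T1 \<subseteq> {..<n}"
    proof
      fix j assume "j \<in> (\<lambda>S. card S - 1) ` T1"
      then obtain S where S: "S \<in> T1" "j = card S - 1" by blast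
      then have "card S \<le> card {..<n}" unfolding T1_def by (intro card_mono) auto
      then show "j \<in> {..<n}" using S n by simp
    qed
  qed
  also have "\<dots> = (\<Sum>j<n. (-1)^j * Xc n A (Suc j) * z^j)"
  proof (rule sum.cong[OF refl])
    fix j assume "j \<in> {..<n}"
    have "(\<Sum>S\<in>{S\<in>T1. card S - 1 = j}. (-1)^(card S - 1) * z^(card S - 1) * pdet A S) = (\<Sum>S\<in>{S\<in>T1. card S - 1 = j}. (-1)^j * z^j * pdet A S)"
      by (rule sum.cong) auto
    also have "\<dots> = (-1)^j * z^j * (\<Sum>S\<in>{S\<in>T1. card S - 1 = j}. pdet A S)" by (simp add: sum_distrib_left)
    also have "(\<Sum>S\<in>{S\<in>T1. card S - 1 = j}. pdet A S) = Xc n A (Suc j)"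
    proof (cases "j = 0")
      case True
      have "{S\<in>T1. card S - 1 = j} = {{0}}"
      proof (intro set_eqI iffI)
        fix S assume "S \<in> {S\<in>T1. card S - 1 = j}"
        then have S: "S \<subseteq> {..<n}" "0 \<in> S" "card S - 1 = 0" unfolding T1_def using True by auto
        then have "finite S" using finite_subset by blast
        then have "card S > 0" using S(2) card_gt_0_iff by blast
        then have "card S = 1" using S(3) by linarith
        then obtain x where "S = {x}" by (rule card_1_singletonE)
        then show "S \<in> {{0}}" using S(2) by simp
      next
        fix S :: "nat set" assume "S \<in> {{0}}"
        then show "S \<in> {S\<in>T1. card S - 1 = j}" using True n unfolding T1_def by auto
      qed
      then show ?thesis using True by (simp add: pdet_sing Xc_def)
    next
      case False
      have "{S\<in>T1. card S - 1 = j} = {I. I \<subseteq> {..<n} \<and> card I = Suc j \<and> 0 \<in> I}"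
      proof (intro set_eqI iffI)
        fix S assume "S \<in> {S\<in>T1. card S - 1 = j}"
        then have S: "S \<subseteq> {..<n}" "0 \<in> S" "card S - 1 = j" unfolding T1_def by auto
        then have "finite S" using finite_subset by blast
        then have "card S > 0" using S(2) card_gt_0_iff by blast
        then show "S \<in> {I. I \<subseteq> {..<n} \<and> card I = Suc j \<and> 0 \<in> I}" using S by simp
      next
        fix S assume "S \<in> {I. I \<subseteq> {..<n} \<and> card I = Suc j \<and> 0 \<in> I}"
        then show "S \<in> {S\<in>T1. card S - 1 = j}" unfolding T1_def by simp
      qed
      then show ?thesis using False by (simp add: Xc_def)
    qed
    finally show "(\<Sum>S\<in>{S\<in>T1. card S - 1 = j}. (-1)^(card S - 1) * z^(card S - 1) * pdet A S) = (-1)^j * Xc n A (Suc j) * z^j"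
      by (simp add: mult_ac)
  qed
  also have "\<dots> = poly (Pn n (Xc n A)) z" by (simp add: poly_Pn)
  finally show ?thesis by simp
qed




definition Xd :: "complex \<Rightarrow> complex \<Rightarrow> cmat" where
  "Xd w z = (\<lambda>i j. if i = j then (if i = 0 then w else z) else 0)"

lemma E1n_eq: "E1n = {X. \<exists>z w. X = Xd w z}"
  unfolding E1n_def Xd_def ..

lemma mmul_Xd: "j < n \<Longrightarrow> mmul n A (Xd w z) i j = A i j * dd w z j"
proof -
  assume j: "j < n"
  have "(\<Sum>k<n. A i k * Xd w z k j) = (\<Sum>k<n. if k = j then A i j * dd w z j else 0)"
    by (rule sum.cong) (auto simp: Xd_def dd_def)
  then show ?thesis using j by (simp add: mmul_def)
qed

lemma cdet_Xd: "cdet n (\<lambda>i j. idm i j - mmul n A (Xd w z) i j)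
   = (\<Sum>S\<in>Pow {..<n}. (-1)^card S * (\<Prod>i\<in>S. dd w z i) * pdet A S)"
proof -
  have "cdet n (\<lambda>i j. idm i j - mmul n A (Xd w z) i j)
     = (\<Sum>p | p permutes {..<n}. of_int (sign p) * (\<Prod>i\<in>{..<n}. (if i = p i then 1 else 0) - A i (p i) * dd w z (p i)))"
    unfolding cdet_def pdet_def
  proof (rule sum.cong[OF refl])
    fix p assume "p \<in> {p. p permutes {..<n}}"
    then have p: "p permutes {..<n}" by simp
    show "of_int (sign p) * (\<Prod>i\<in>{..<n}. idm i (p i) - mmul n A (Xd w z) i (p i)) =
        of_int (sign p) * (\<Prod>i\<in>{..<n}. (if i = p i then 1 else 0) - A i (p i) * dd w z (p i))"
    proof (intro arg_cong2[where f="(*)"] refl prod.cong)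
      fix i assume "i \<in> {..<n}"
      then have "p i < n" using permutes_in_image[OF p] by simp
      then show "idm i (p i) - mmul n A (Xd w z) i (p i) = (if i = p i then 1 else 0) - A i (p i) * dd w z (p i)"
        by (simp add: mmul_Xd idm_def)
    qed
  qed
  also have "\<dots> = (\<Sum>S\<in>Pow {..<n}. (-1)^card S * (\<Prod>i\<in>S. dd w z i) * pdet A S)"
    by (rule det_expand) simp
  finally show ?thesis .
qed

lemma sing_Xd: "n \<ge> 1 \<Longrightarrow> singular n (\<lambda>i j. idm i j - mmul n A (Xd w z) i j)
   \<longleftrightarrow> poly (Qn n (Yc n A)) z - w * poly (Pn n (Xc n A)) z = 0"
  unfolding singular_def cdet_Xd by (simp add: D_poly)

lemma mvec_Xd: "mvec n (Xd w z) v i = (if i < n then dd w z i * v i else 0)"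
proof -
  have "(\<Sum>k<n. Xd w z i k * v k) = (\<Sum>k<n. if k = i then dd w z i * v i else 0)"
    by (rule sum.cong) (auto simp: Xd_def dd_def)
  then show ?thesis by (simp add: mvec_def)
qed

lemma vnorm_delta: "k < n \<Longrightarrow> vnorm n (\<lambda>i. if i = k then c else 0) = cmod c"
proof -
  assume k: "k < n"
  have "(\<Sum>i<n. (cmod (if i = k then c else 0))^2) = (\<Sum>i<n. if i = k then (cmod c)^2 else 0)"
    by (rule sum.cong) auto
  then show ?thesis using k by (simp add: vnorm_def)
qed

lemma opnorm_Xd:
  assumes n: "n \<ge> 2"
  shows "opnorm n (Xd w z) = max (cmod w) (cmod z)"
proof -
  define m where "m = max (cmod w) (cmod z)"
  define T where "T = {vnorm n (mvec n (Xd w z) v) | v. vnorm n v \<le> 1}"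
  have "m \<ge> 0" unfolding m_def by (simp add: le_max_iff_disj)
  have ub: "t \<le> m" if "t \<in> T" for t
  proof -
    obtain v where v: "t = vnorm n (mvec n (Xd w z) v)" "vnorm n v \<le> 1" using \<open>t \<in> T\<close> T_def by blast
    have "(\<Sum>i<n. (cmod (mvec n (Xd w z) v i))^2) \<le> (\<Sum>i<n. m^2 * (cmod (v i))^2)"
    proof (rule sum_mono)
      fix i assume "i \<in> {..<n}"
      have "cmod (dd w z i) \<le> m" by (simp add: dd_def m_def)
      then have "(cmod (dd w z i))^2 \<le> m^2" by (simp add: power_mono)
      then show "(cmod (mvec n (Xd w z) v i))^2 \<le> m^2 * (cmod (v i))^2"
        using \<open>i \<in> {..<n}\<close> by (simp add: mvec_Xd norm_mult power_mult_distrib mult_right_mono)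
    qed
    also have "\<dots> = m^2 * (\<Sum>i<n. (cmod (v i))^2)" by (simp add: sum_distrib_left)
    finally have "vnorm n (mvec n (Xd w z) v) \<le> sqrt (m^2 * (\<Sum>i<n. (cmod (v i))^2))"
      unfolding vnorm_def by (rule real_sqrt_le_mono)
    also have "\<dots> = m * vnorm n v" using \<open>m \<ge> 0\<close> by (simp add: real_sqrt_mult vnorm_def)
    also have "\<dots> \<le> m * 1" using v(2) \<open>m \<ge> 0\<close> by (intro mult_left_mono) auto
    finally show ?thesis using v by simp
  qed
  have "vnorm n (mvec n (Xd w z) (\<lambda>i. 0)) \<in> T" unfolding T_def by (auto simp: vnorm_def)
  then have ne: "T \<noteq> {}" by blast
  have bdd: "bdd_above T" using ub by (intro bdd_aboveI[where M=m]) auto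
  have le1: "opnorm n (Xd w z) \<le> m" unfolding opnorm_def T_def[symmetric] by (rule cSup_least[OF ne ub])
  have lw: "cmod w \<in> T"
  proof -
    have "mvec n (Xd w z) (\<lambda>i. if i = 0 then 1 else 0) = (\<lambda>i. if i = 0 then w else 0)"
      using n by (auto simp: mvec_Xd dd_def fun_eq_iff)
    then show ?thesis unfolding T_def using n vnorm_delta[of 0 n w] vnorm_delta[of 0 n 1]
      by (auto intro!: exI[of _ "\<lambda>i. if i = 0 then 1 else 0"])
  qed
  have lz: "cmod z \<in> T"
  proof -
    have "mvec n (Xd w z) (\<lambda>i. if i = 1 then 1 else 0) = (\<lambda>i. if i = 1 then z else 0)"
      using n by (auto simp: mvec_Xd dd_def fun_eq_iff)
    then show ?thesis unfolding T_def using n vnorm_delta[of 1 n z] vnorm_delta[of 1 n 1]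
      by (auto intro!: exI[of _ "\<lambda>i. if i = 1 then 1 else 0"])
  qed
  have "m \<le> opnorm n (Xd w z)" unfolding opnorm_def T_def[symmetric] m_def
    using cSup_upper[OF lw bdd] cSup_upper[OF lz bdd] by simp
  with le1 show ?thesis unfolding m_def by simp
qed


lemma poly_Qn0: "poly (Qn n y) 0 = 1"
proof -
  have "(\<Sum>j\<in>{1..<n}. (-1)^j * y j * (0::complex)^j) = 0" by (rule sum.neutral) auto
  then show ?thesis by (simp add: poly_Qn)
qed

lemma Pbound: "cmod z \<le> 1 \<Longrightarrow> cmod (poly (Pn n x) z) \<le> (\<Sum>j<n. cmod (x (Suc j)))"
proof -
  assume z: "cmod z \<le> 1"
  have "cmod (poly (Pn n x) z) \<le> (\<Sum>j<n. cmod ((-1)^j * x (Suc j) * z^j))"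
    unfolding poly_Pn by (rule norm_sum)
  also have "\<dots> \<le> (\<Sum>j<n. cmod (x (Suc j)))"
  proof (rule sum_mono)
    fix j
    have "cmod z ^ j \<le> 1" using z by (simp add: power_le_one)
    then have "cmod (x (Suc j)) * cmod z ^ j \<le> cmod (x (Suc j)) * 1" by (intro mult_left_mono) auto
    then show "cmod ((-1)^j * x (Suc j) * z^j) \<le> cmod (x (Suc j))" by (simp add: norm_mult norm_power)
  qed
  finally show ?thesis .
qed

lemma omega_nonsing:
  assumes n: "n \<ge> 2" and A: "A \<in> Omega1n n" and w: "cmod w \<le> 1" and z: "cmod z \<le> 1"
  shows "poly (Qn n (Yc n A)) z - w * poly (Pn n (Xc n A)) z \<noteq> 0"
proof
  assume sing0: "poly (Qn n (Yc n A)) z - w * poly (Pn n (Xc n A)) z = 0"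
  define Qp where "Qp = Qn n (Yc n A)"
  define Pp where "Pp = Pn n (Xc n A)"
  have n1: "n \<ge> 1" using n by simp
  define S where "S = {opnorm n X | X. X \<in> E1n \<and> singular n (\<lambda>i j. idm i j - mmul n A X i j)}"
  have XinS: "max (cmod w) (cmod z) \<in> S"
    unfolding S_def
  proof (rule CollectI, rule exI[of _ "Xd w z"])
    show "max (cmod w) (cmod z) = opnorm n (Xd w z) \<and> Xd w z \<in> E1n \<and> singular n (\<lambda>i j. idm i j - mmul n A (Xd w z) i j)"
      using opnorm_Xd[OF n, of w z] sing_Xd[OF n1, of A w z] sing0 by (auto simp: E1n_eq)
  qed
  have "mu n E1n A < 1" using A by (simp add: Omega1n_def)
  then have mu: "inverse (Inf S) < 1" using XinS unfolding mu_def Let_def S_def[symmetric]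
    by (auto split: if_splits)
  have "isCont (\<lambda>x. poly Qp x) 0" by simp
  then obtain d1 where d1: "d1 > 0" "\<And>x. dist x 0 < d1 \<Longrightarrow> dist (poly Qp x) (poly Qp 0) < 1/2"
    unfolding continuous_at_eps_delta by (meson half_gt_zero zero_less_one)
  define B where "B = (\<Sum>j<n. cmod (Xc n A (Suc j)))"
  have B0: "B \<ge> 0" unfolding B_def by (intro sum_nonneg) auto
  define d where "d = min d1 (min 1 (1/(2*(B+1))))"
  have dpos: "d > 0" unfolding d_def using d1 B0 by simp
  have small: "poly Qp z' - w' * poly Pp z' \<noteq> 0" if "cmod w' < d" "cmod z' < d" for w' z'
  proof
    assume eq: "poly Qp z' - w' * poly Pp z' = 0"
    have "cmod (poly Qp z' - 1) < 1/2" using d1(2)[of z'] that poly_Qn0[of n "Yc n A"]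
      by (simp add: Qp_def d_def dist_norm)
    moreover have "cmod (1::complex) \<le> cmod (poly Qp z') + cmod (1 - poly Qp z')" by (rule norm_triangle_sub)
    ultimately have q: "cmod (poly Qp z') > 1/2" by (simp add: norm_minus_commute)
    have "cmod (w' * poly Pp z') \<le> cmod w' * B"
      unfolding norm_mult B_def Pp_def
      by (intro mult_left_mono Pbound) (use that in \<open>auto simp: d_def\<close>)
    also have "\<dots> \<le> (1/(2*(B+1))) * B"
      using that B0 by (intro mult_right_mono) (auto simp: d_def)
    also have "\<dots> < 1/2" using B0 by (simp add: field_simps)
    finally have "cmod (w' * poly Pp z') < 1/2" .
    moreover have "poly Qp z' = w' * poly Pp z'" using eq by simp
    ultimately show False using q by simp
  qed
  have lb: "d \<le> s" if sS: "s \<in> S" for s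
  proof -
    obtain X where X: "s = opnorm n X" "X \<in> E1n" "singular n (\<lambda>i j. idm i j - mmul n A X i j)"
      using sS unfolding S_def by blast
    then obtain w' z' where Xw: "X = Xd w' z'" by (auto simp: E1n_eq)
    have s: "s = max (cmod w') (cmod z')" using X(1) Xw opnorm_Xd[OF n] by simp
    have e: "poly Qp z' - w' * poly Pp z' = 0" using X(3) Xw sing_Xd[OF n1] by (simp add: Qp_def Pp_def)
    show ?thesis
    proof (rule ccontr)
      assume "\<not> d \<le> s"
      then have "cmod w' < d" "cmod z' < d" using s by auto
      then show False using small e by blast
    qed
  qed
  have "d \<le> Inf S" using XinS lb by (intro cInf_greatest) auto
  moreover have "Inf S \<le> max (cmod w) (cmod z)"
    by (rule cInf_lower[OF XinS]) (use lb in \<open>auto intro: bdd_belowI[where m=d]\<close>)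
  ultimately have "0 < Inf S" "Inf S \<le> 1" using dpos w z by auto
  then have "1 \<le> inverse (Inf S)" by (rule one_le_inverse)
  with mu show False by simp
qed

lemma omega_Q:
  assumes "n \<ge> 2" "A \<in> Omega1n n" "cmod z \<le> 1"
  shows "poly (Qn n (Yc n A)) z \<noteq> 0"
  using omega_nonsing[OF assms(1,2) _ assms(3), of 0] by simp

lemma omega_PQ:
  assumes "n \<ge> 2" "A \<in> Omega1n n" "cmod z \<le> 1"
  shows "cmod (poly (Pn n (Xc n A)) z) < cmod (poly (Qn n (Yc n A)) z)"
proof (rule ccontr)
  assume "\<not> ?thesis"
  then have le: "cmod (poly (Qn n (Yc n A)) z) \<le> cmod (poly (Pn n (Xc n A)) z)" by simp
  have Q: "poly (Qn n (Yc n A)) z \<noteq> 0" by (rule omega_Q[OF assms])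
  then have P: "poly (Pn n (Xc n A)) z \<noteq> 0" using le by auto
  define w where "w = poly (Qn n (Yc n A)) z / poly (Pn n (Xc n A)) z"
  have "cmod w \<le> 1" using le P by (simp add: w_def norm_divide divide_le_eq_1)
  moreover have "poly (Qn n (Yc n A)) z - w * poly (Pn n (Xc n A)) z = 0" using P by (simp add: w_def)
  ultimately show False using omega_nonsing[OF assms(1,2) _ assms(3)] by blast
qed


lemma pdet_local:
  assumes "\<forall>a<n. \<forall>b<n. A a b = B a b" "I \<subseteq> {..<n}"
  shows "pdet A I = pdet B I"
  unfolding pdet_def
proof (rule sum.cong[OF refl])
  fix p assume "p \<in> {p. p permutes I}"
  then have p: "p permutes I" by simp
  have "(\<Prod>i\<in>I. A i (p i)) = (\<Prod>i\<in>I. B i (p i))"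
  proof (rule prod.cong[OF refl])
    fix i assume "i \<in> I"
    then have "p i \<in> I" using permutes_in_image[OF p] by simp
    then show "A i (p i) = B i (p i)" using \<open>i \<in> I\<close> assms by blast
  qed
  then show "of_int (sign p) * (\<Prod>i\<in>I. A i (p i)) = of_int (sign p) * (\<Prod>i\<in>I. B i (p i))" by simp
qed

lemma Xc_local:
  assumes "n \<ge> 1" "\<forall>a<n. \<forall>b<n. A a b = B a b"
  shows "Xc n A = Xc n B"
proof
  fix j
  show "Xc n A j = Xc n B j"
    unfolding Xc_def using assms pdet_local[OF assms(2)] by (auto intro!: sum.cong)
qed

lemma Yc_local:
  assumes "\<forall>a<n. \<forall>b<n. A a b = B a b"
  shows "Yc n A = Yc n B"
proof
  fix j
  show "Yc n A j = Yc n B j"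
    unfolding Yc_def using pdet_local[OF assms] by (auto intro!: sum.cong)
qed

lemma pdet_hol:
  assumes "\<forall>a<n. \<forall>b<n. (\<lambda>\<zeta>. F \<zeta> a b) holomorphic_on U" "I \<subseteq> {..<n}"
  shows "(\<lambda>\<zeta>. pdet (F \<zeta>) I) holomorphic_on U"
  unfolding pdet_def
proof (intro holomorphic_intros)
  fix p i assume "p \<in> {p. p permutes I}" "i \<in> I"
  then have "p i \<in> I" using permutes_in_image by fastforce
  then show "(\<lambda>\<zeta>. F \<zeta> i (p i)) holomorphic_on U" using assms \<open>i \<in> I\<close> by blast
qed

lemma Xc_hol:
  assumes "n \<ge> 1" "\<forall>a<n. \<forall>b<n. (\<lambda>\<zeta>. F \<zeta> a b) holomorphic_on U"
  shows "(\<lambda>\<zeta>. Xc n (F \<zeta>) j) holomorphic_on U"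
proof (cases "j = 1")
  case True
  then show ?thesis using assms by (simp add: Xc_def)
next
  case False
  then show ?thesis unfolding Xc_def using pdet_hol[OF assms(2)]
    by (simp, intro holomorphic_intros) auto
qed

lemma Yc_hol:
  assumes "\<forall>a<n. \<forall>b<n. (\<lambda>\<zeta>. F \<zeta> a b) holomorphic_on U"
  shows "(\<lambda>\<zeta>. Yc n (F \<zeta>) j) holomorphic_on U"
  unfolding Yc_def using pdet_hol[OF assms] by (intro holomorphic_intros) auto

lemma P_hol:
  assumes "n \<ge> 1" "\<forall>a<n. \<forall>b<n. (\<lambda>\<zeta>. F \<zeta> a b) holomorphic_on U"
  shows "(\<lambda>\<zeta>. poly (Pn n (Xc n (F \<zeta>))) z) holomorphic_on U"
  unfolding poly_Pn by (intro holomorphic_intros Xc_hol[OF assms])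

lemma Q_hol:
  assumes "\<forall>a<n. \<forall>b<n. (\<lambda>\<zeta>. F \<zeta> a b) holomorphic_on U"
  shows "(\<lambda>\<zeta>. poly (Qn n (Yc n (F \<zeta>))) z) holomorphic_on U"
  unfolding poly_Qn by (intro holomorphic_intros Yc_hol[OF assms])

lemma Psi_eq:
  assumes "poly (Qn n y) z \<noteq> 0"
  shows "Psi n z x y = poly (Pn n x) z / poly (Qn n y) z \<and> poly (Psi_den n x y) z \<noteq> 0"
proof -
  define g where "g = gcd (Pn n x) (Qn n y)"
  have P: "Pn n x = Psi_num n x y * g" unfolding Psi_num_def g_def by simp
  have Q: "Qn n y = Psi_den n x y * g" unfolding Psi_den_def g_def by simp
  have "poly (Psi_den n x y) z * poly g z \<noteq> 0" using assms Q by (metis poly_mult)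
  then have nz: "poly (Psi_den n x y) z \<noteq> 0" "poly g z \<noteq> 0" by auto
  have "poly (Pn n x) z / poly (Qn n y) z = (poly (Psi_num n x y) z * poly g z) / (poly (Psi_den n x y) z * poly g z)"
    by (subst P, subst Q) simp
  also have "\<dots> = Psi n z x y" unfolding Psi_def using nz by simp
  finally show ?thesis using nz by simp
qed

lemma psd_pform: "psd M K \<longleftrightarrow> (\<forall>c. nneg (pform M K c))"
  by (simp add: psd_def pform_def nneg_def Let_def)

theorem theorem2:
  fixes n M :: nat and \<zeta> :: "nat \<Rightarrow> complex" and W :: "nat \<Rightarrow> cmat"
  assumes "n \<ge> 2"
    and "inj_on \<zeta> {..<M}"
    and "\<forall>j<M. \<zeta> j \<in> ball 0 1"
    and "\<forall>j<M. W j \<in> Omega1n n"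
    and "\<exists>F :: complex \<Rightarrow> cmat.
           (\<forall>a<n. \<forall>b<n. (\<lambda>z. F z a b) holomorphic_on ball 0 1)
         \<and> (\<forall>z\<in>ball 0 1. F z \<in> Omega1n n)
         \<and> (\<forall>j<M. \<forall>a<n. \<forall>b<n. F (\<zeta> j) a b = W j a b)"
  shows "\<forall>z. cmod z \<le> 1 \<longrightarrow>
           (\<forall>j<M. poly (Psi_den n (Xc n (W j)) (Yc n (W j))) z \<noteq> 0)
         \<and> psd M (\<lambda>j k. (1 - cnj (Psi n z (Xc n (W j)) (Yc n (W j)))
                             * Psi n z (Xc n (W k)) (Yc n (W k)))
                          / (1 - cnj (\<zeta> j) * \<zeta> k))"
proof (intro allI impI)
  fix z :: complex assume z: "cmod z \<le> 1"
  have n1: "n \<ge> 1" using assms(1) by simp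
  obtain F :: "complex \<Rightarrow> cmat" where
    Fh: "\<forall>a<n. \<forall>b<n. (\<lambda>z. F z a b) holomorphic_on ball 0 1" and
    FO: "\<forall>z\<in>ball 0 1. F z \<in> Omega1n n" and
    FW: "\<forall>j<M. \<forall>a<n. \<forall>b<n. F (\<zeta> j) a b = W j a b"
    using assms(5) by blast
  have PsiW: "Psi n z (Xc n (W j)) (Yc n (W j)) = poly (Pn n (Xc n (W j))) z / poly (Qn n (Yc n (W j))) z
     \<and> poly (Psi_den n (Xc n (W j)) (Yc n (W j))) z \<noteq> 0" if "j < M" for j
    by (rule Psi_eq, rule omega_Q[OF assms(1) _ z]) (use assms(4) that in auto)
  then have C1: "\<forall>j<M. poly (Psi_den n (Xc n (W j)) (Yc n (W j))) z \<noteq> 0" by blast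
  define f where "f \<zeta>' = poly (Pn n (Xc n (F \<zeta>'))) z / poly (Qn n (Yc n (F \<zeta>'))) z" for \<zeta>'
  have Qnz: "poly (Qn n (Yc n (F \<zeta>'))) z \<noteq> 0" if "\<zeta>' \<in> ball 0 1" for \<zeta>'
    using omega_Q[OF assms(1) _ z] FO that by blast
  have holf: "f holomorphic_on ball 0 1"
    unfolding f_def by (intro holomorphic_intros P_hol[OF n1 Fh] Q_hol[OF Fh] Qnz)
  have fball: "f \<zeta>' \<in> ball 0 1" if "\<zeta>' \<in> ball 0 1" for \<zeta>'
  proof -
    have "cmod (poly (Pn n (Xc n (F \<zeta>'))) z) < cmod (poly (Qn n (Yc n (F \<zeta>'))) z)"
      using omega_PQ[OF assms(1) _ z] FO that by blast
    then show ?thesis using Qnz[OF that] by (simp add: f_def norm_divide divide_less_eq_1)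
  qed
  have fW: "f (\<zeta> j) = Psi n z (Xc n (W j)) (Yc n (W j))" if "j < M" for j
  proof -
    have "Xc n (F (\<zeta> j)) = Xc n (W j)" by (rule Xc_local[OF n1]) (use FW that in auto)
    moreover have "Yc n (F (\<zeta> j)) = Yc n (W j)" by (rule Yc_local) (use FW that in auto)
    ultimately show ?thesis using PsiW[OF that] by (simp add: f_def)
  qed
  have "psd M (\<lambda>j k. (1 - cnj (Psi n z (Xc n (W j)) (Yc n (W j)))
                             * Psi n z (Xc n (W k)) (Yc n (W k)))
                          / (1 - cnj (\<zeta> j) * \<zeta> k))"
    unfolding psd_pform
  proof
    fix c
    have "nneg (pform M (pick f \<zeta>) c)"
      by (rule pick_ball[OF holf fball assms(2)]) (use assms(3) in auto)
    moreover have "pform M (pick f \<zeta>) c = pform M (\<lambda>j k. (1 - cnj (Psi n z (Xc n (W j)) (Yc n (W j)))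
                             * Psi n z (Xc n (W k)) (Yc n (W k)))
                          / (1 - cnj (\<zeta> j) * \<zeta> k)) c"
      by (rule pform_cong) (simp add: pick_def fW)
    ultimately show "nneg (pform M (\<lambda>j k. (1 - cnj (Psi n z (Xc n (W j)) (Yc n (W j)))
                             * Psi n z (Xc n (W k)) (Yc n (W k)))
                          / (1 - cnj (\<zeta> j) * \<zeta> k)) c)" by simp
  qed
  with C1 show "(\<forall>j<M. poly (Psi_den n (Xc n (W j)) (Yc n (W j))) z \<noteq> 0)
         \<and> psd M (\<lambda>j k. (1 - cnj (Psi n z (Xc n (W j)) (Yc n (W j)))
                             * Psi n z (Xc n (W k)) (Yc n (W k)))
                          / (1 - cnj (\<zeta> j) * \<zeta> k))" by blast
qed

end
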